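(* Let $\lambda$ be a straight or skew shape with $n$ boxes and let $m\in\mathbb N=\{1,2,\dots\}$. Then $\#T[\lambda,m]=2^nf^\lambda$, where $f^\lambda$ is the number of standard Young tableaux of shape $\lambda$.
   Context: For a box in row $i$, column $j$ (rows numbered downward) its (semi-integer) content is $j-i+\frac12$. A B-Young tableau is a filling of a skew diagram by the $2n$ numbers $\pm1,\dots,\pm n$, one per box, such that $c_{-k}=-c_k$ for $1\le k\le n$, where $c_k$ is the content of the box containing $k$; it is standard if entries increase along rows and down columns. Since no content is $0$, a B-Young tableau is regarded as determined by its part of positive content (entries and contents), the negative part being forced. For $m\in\mathbb N$, $T[\lambda,m]$ is the set of standard B-Young tableaux whose positive-content boxes form the shape $\lambda$ and whose smallest positive content is $m+\frac12$. *)

theory Defs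
  imports Main
begin

text \<open>A partition is a weakly decreasing list of naturals. Cells are (row, column),
rows numbered downward.\<close>

definition is_partition :: "nat list \<Rightarrow> bool" where
  "is_partition p \<longleftrightarrow> sorted_wrt (\<ge>) p"

definition young_diagram :: "nat list \<Rightarrow> (nat \<times> nat) set" where
  "young_diagram p = {(i, j). i < length p \<and> j < p ! i}"

definition skew_diagram :: "nat list \<Rightarrow> nat list \<Rightarrow> (nat \<times> nat) set" where
  "skew_diagram mu nu = young_diagram mu - young_diagram nu"

text \<open>Standard Young tableaux of a shape D with n = card D boxes: bijective fillings
by 1..n increasing along rows and down columns (for skew shapes rows/columns are
contiguous, so adjacent boxes suffice).\<close>
definition SYT :: "(nat \<times> nat) set \<Rightarrow> ((nat \<times> nat) \<Rightarrow> nat) set" where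
  "SYT D = {F. bij_betw F D {1..card D} \<and> (\<forall>c. c \<notin> D \<longrightarrow> F c = 0) \<and>
     (\<forall>i j. (i, j) \<in> D \<and> (i, Suc j) \<in> D \<longrightarrow> F (i, j) < F (i, Suc j)) \<and>
     (\<forall>i j. (i, j) \<in> D \<and> (Suc i, j) \<in> D \<longrightarrow> F (i, j) < F (Suc i, j))}"

definition num_SYT :: "(nat \<times> nat) set \<Rightarrow> nat" where
  "num_SYT D = card (SYT D)"

text \<open>The (semi-integer) content of box (i,j) is j - i + 1/2;
we store the integer part  j - i  (so content c+1/2 is represented by c).
Negation of contents  c+1/2 \<mapsto> -(c+1/2) = (-c-1)+1/2  is  c \<mapsto> -c-1.\<close>

definition icontent :: "int \<times> int \<Rightarrow> int" where
  "icontent c = snd c - fst c"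

definition B_young :: "nat \<Rightarrow> (int \<times> int) set \<Rightarrow> (int \<times> int \<Rightarrow> int) \<Rightarrow> bool" where
  "B_young n D F \<longleftrightarrow> finite D \<and>
     bij_betw F D ({- int n..-1} \<union> {1..int n}) \<and>
     (\<forall>c\<in>D. \<forall>c'\<in>D. F c' = - F c \<longrightarrow> icontent c' = - icontent c - 1)"

definition B_standard :: "(int \<times> int) set \<Rightarrow> (int \<times> int \<Rightarrow> int) \<Rightarrow> bool" where
  "B_standard D F \<longleftrightarrow>
     (\<forall>i j. (i, j) \<in> D \<and> (i, j + 1) \<in> D \<longrightarrow> F (i, j) < F (i, j + 1)) \<and>
     (\<forall>i j. (i, j) \<in> D \<and> (i + 1, j) \<in> D \<longrightarrow> F (i, j) < F (i + 1, j))"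

text \<open>Placement of the shape lambda as the positive-content part, shifted horizontally
so that its smallest content is m + 1/2 (the placement is canonical up to diagonal
translation, which does not change contents).\<close>
definition place :: "(nat \<times> nat) set \<Rightarrow> nat \<Rightarrow> (int \<times> int) set" where
  "place L m = (let s = int m - Min {int j - int i | i j. (i, j) \<in> L}
                in (\<lambda>(i, j). (int i, int j + s)) ` L)"

text \<open>Rotation by 180 degrees mapping a box of content c+1/2 to a box of content
-(c+1/2); used to place the (forced) negative-content part.\<close>
definition rot :: "int \<times> int \<Rightarrow> int \<times> int" where
  "rot c = (- fst c - 1, - snd c - 2)"

text \<open>T[lambda, m]: standard B-Young tableaux whose positive-content part is lambda with
smallest positive content m+1/2, each identified with its positive-content part
(restriction of the filling to the positive boxes).\<close>
definition T_B :: "(nat \<times> nat) set \<Rightarrow> nat \<Rightarrow> (int \<times> int \<Rightarrow> int) set" where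
  "T_B L m = (let P = place L m; D = P \<union> rot ` P
              in (\<lambda>F c. if c \<in> P then F c else 0) `
                 {F. B_young (card L) D F \<and> B_standard D F})"

end

theory Submission
  imports Defs "HOL-Library.FuncSet"
begin

lemma inv_strict_mono:
  fixes f :: "'b::linorder \<Rightarrow> 'd::linorder"
  assumes f: "bij_betw f V W" and fm: "strict_mono_on V f"
    and x: "x \<in> W" and y: "y \<in> W" and xy: "x < y"
  shows "inv_into V f x < inv_into V f y"
proof (rule ccontr)
  assume "\<not> ?thesis"
  hence le: "inv_into V f y \<le> inv_into V f x" by simp
  have a: "inv_into V f x \<in> V" "inv_into V f y \<in> V"
    using x y f by (auto intro: inv_into_into simp: bij_betw_def)
  have fx: "f (inv_into V f x) = x" "f (inv_into V f y) = y"
    using x y f by (auto intro: f_inv_into_f simp: bij_betw_def)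
  show False
  proof (cases "inv_into V f y = inv_into V f x")
    case True then show False using fx xy by auto
  next
    case False
    hence "inv_into V f y < inv_into V f x" using le by simp
    hence "f (inv_into V f y) < f (inv_into V f x)" using strict_mono_onD[OF fm] a by blast
    then show False using fx xy by simp
  qed
qed

lemma transport:
  fixes h :: "'a \<Rightarrow> 'c" and f :: "'b::{linorder,zero} \<Rightarrow> 'd::{linorder,zero}"
  assumes h: "bij_betw h D D'" and f: "bij_betw f V W" and fm: "strict_mono_on V f"
    and R: "R \<subseteq> D \<times> D" and R': "R' = (\<lambda>(a,b). (h a, h b)) ` R"
  shows "card {G. bij_betw G D V \<and> (\<forall>c. c \<notin> D \<longrightarrow> G c = 0) \<and> (\<forall>(a,b)\<in>R. G a < G b)}
       = card {G. bij_betw G D' W \<and> (\<forall>c. c \<notin> D' \<longrightarrow> G c = 0) \<and> (\<forall>(a,b)\<in>R'. G a < G b)}"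
    (is "card ?A = card ?B")
proof (rule bij_betw_same_card)
  let ?P = "\<lambda>G c. if c \<in> D' then f (G (inv_into D h c)) else 0"
  let ?Q = "\<lambda>G c. if c \<in> D then inv_into V f (G (h c)) else 0"
  have hi: "\<And>c. c \<in> D \<Longrightarrow> inv_into D h (h c) = c" using h by (simp add: bij_betw_def)
  have hD: "\<And>c. c \<in> D \<Longrightarrow> h c \<in> D'" using h by (auto simp: bij_betw_def)
  have hi2: "\<And>c. c \<in> D' \<Longrightarrow> h (inv_into D h c) = c" using h by (auto simp: bij_betw_def intro: f_inv_into_f)
  have hiD: "\<And>c. c \<in> D' \<Longrightarrow> inv_into D h c \<in> D" using h by (auto simp: bij_betw_def intro: inv_into_into)
  have fi: "\<And>c. c \<in> V \<Longrightarrow> inv_into V f (f c) = c" using f by (simp add: bij_betw_def)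
  have fi2: "\<And>c. c \<in> W \<Longrightarrow> f (inv_into V f c) = c" using f by (auto simp: bij_betw_def intro: f_inv_into_f)
  have hinv: "bij_betw (inv_into D h) D' D" using h by (rule bij_betw_inv_into)
  have finv: "bij_betw (inv_into V f) W V" using f by (rule bij_betw_inv_into)
  show "bij_betw ?P ?A ?B"
  proof (rule bij_betw_byWitness[where f' = ?Q])
    show "\<forall>G\<in>?A. ?Q (?P G) = G"
    proof
      fix G assume G: "G \<in> ?A"
      show "?Q (?P G) = G"
      proof
        fix c show "?Q (?P G) c = G c"
          using G hi hD fi by (auto simp: bij_betw_def)
      qed
    qed
    show "\<forall>G\<in>?B. ?P (?Q G) = G"
    proof
      fix G assume G: "G \<in> ?B"
      show "?P (?Q G) = G"
      proof
        fix c show "?P (?Q G) c = G c"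
          using G hi2 hiD fi2 by (auto simp: bij_betw_def)
      qed
    qed
    show "?P ` ?A \<subseteq> ?B"
    proof
      fix G' assume "G' \<in> ?P ` ?A"
      then obtain G where G: "G \<in> ?A" and G': "G' = ?P G" by blast
      have b1: "bij_betw (f \<circ> G \<circ> inv_into D h) D' W"
        using G hinv f by (auto intro: bij_betw_trans)
      have "bij_betw G' D' W"
        by (rule bij_betw_cong[THEN iffD1, OF _ b1]) (simp add: G')
      moreover have "\<forall>(a,b)\<in>R'. G' a < G' b"
      proof (clarsimp simp: R')
        fix a b assume ab: "(a,b) \<in> R"
        hence "a \<in> D" "b \<in> D" using R by auto
        moreover have "G a < G b" using G ab by auto
        moreover have "G a \<in> V" "G b \<in> V" using G \<open>a \<in> D\<close> \<open>b \<in> D\<close> by (auto simp: bij_betw_def)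
        ultimately show "G' (h a) < G' (h b)"
          using G' hD hi strict_mono_onD[OF fm] by auto
      qed
      ultimately show "G' \<in> ?B" using G' by auto
    qed
    show "?Q ` ?B \<subseteq> ?A"
    proof
      fix G' assume "G' \<in> ?Q ` ?B"
      then obtain G where G: "G \<in> ?B" and G': "G' = ?Q G" by blast
      have b1: "bij_betw (inv_into V f \<circ> G \<circ> h) D V"
        using G h finv by (auto intro: bij_betw_trans)
      have "bij_betw G' D V"
        by (rule bij_betw_cong[THEN iffD1, OF _ b1]) (simp add: G')
      moreover have "\<forall>(a,b)\<in>R. G' a < G' b"
      proof (clarsimp)
        fix a b assume ab: "(a,b) \<in> R"
        hence "a \<in> D" "b \<in> D" using R by auto
        moreover have "G (h a) < G (h b)" using G ab R' by auto
        moreover have "G (h a) \<in> W" "G (h b) \<in> W" using G \<open>a \<in> D\<close> \<open>b \<in> D\<close> hD by (auto simp: bij_betw_def)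
        ultimately show "G' a < G' b"
          using G' inv_strict_mono[OF f fm] by auto
      qed
      ultimately show "G' \<in> ?A" using G' by auto
    qed
  qed
qed

lemma finite_fillings:
  assumes "finite P" "finite S"
  shows "finite {G :: 'a \<Rightarrow> 'b::zero. bij_betw G P S \<and> (\<forall>c. c \<notin> P \<longrightarrow> G c = 0) \<and> Q G}"
proof (rule finite_subset)
  show "finite ((\<lambda>g c. if c \<in> P then g c else 0) ` (PiE P (\<lambda>_. S)))"
    using assms by (intro finite_imageI finite_PiE) auto
  show "{G :: 'a \<Rightarrow> 'b::zero. bij_betw G P S \<and> (\<forall>c. c \<notin> P \<longrightarrow> G c = 0) \<and> Q G}
     \<subseteq> (\<lambda>g c. if c \<in> P then g c else 0) ` (PiE P (\<lambda>_. S))"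
  proof
    fix G assume G: "G \<in> {G :: 'a \<Rightarrow> 'b::zero. bij_betw G P S \<and> (\<forall>c. c \<notin> P \<longrightarrow> G c = 0) \<and> Q G}"
    hence "G = (\<lambda>c. if c \<in> P then restrict G P c else 0)" by auto
    moreover have "restrict G P \<in> PiE P (\<lambda>_. S)" using G by (auto simp: bij_betw_def)
    ultimately show "G \<in> (\<lambda>g c. if c \<in> P then g c else 0) ` (PiE P (\<lambda>_. S))" by blast
  qed
qed

lemma order_iso:
  fixes S :: "'a::linorder set"
  assumes "finite S" "card S = n"
  shows "\<exists>e. bij_betw e {1..n} S \<and> strict_mono_on {1..n} e"
proof -
  define xs where "xs = sorted_list_of_set S"
  have len: "length xs = n" using assms by (simp add: xs_def)
  have ss: "sorted_wrt (<) xs" by (simp add: xs_def)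
  have st: "set xs = S" using assms by (simp add: xs_def)
  have dist: "distinct xs" by (simp add: xs_def)
  let ?e = "\<lambda>k. xs ! (k - 1)"
  have sm: "strict_mono_on {1..n} ?e"
    by (rule strict_mono_onI) (auto intro!: sorted_wrt_nth_less[OF ss] simp: len)
  have "?e ` {1..n} = S"
  proof
    show "?e ` {1..n} \<subseteq> S" using st len by auto
    show "S \<subseteq> ?e ` {1..n}"
    proof
      fix x assume "x \<in> S"
      then obtain i where i: "i < n" "xs ! i = x" using st len by (auto simp: in_set_conv_nth)
      hence "Suc i \<in> {1..n}" by auto
      then show "x \<in> ?e ` {1..n}" using i by force
    qed
  qed
  moreover have "inj_on ?e {1..n}" using sm by (rule strict_mono_on_imp_inj_on)
  ultimately show ?thesis using sm by (auto simp: bij_betw_def)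
qed


lemma rot_rot[simp]: "rot (rot c) = c" by (cases c) (simp add: rot_def)
lemma icontent_rot[simp]: "icontent (rot c) = - icontent c - 1"
  by (simp add: rot_def icontent_def)

definition sgn_set :: "nat \<Rightarrow> nat set \<Rightarrow> int set" where
  "sgn_set n X = int ` X \<union> (\<lambda>k. - int k) ` ({1..n} - X)"

lemma sgn_set_sub: "X \<subseteq> {1..n} \<Longrightarrow> sgn_set n X \<subseteq> {- int n..-1} \<union> {1..int n}"
  by (auto simp: sgn_set_def)

lemma sgn_set_nopair: "X \<subseteq> {1..n} \<Longrightarrow> v \<in> sgn_set n X \<Longrightarrow> - v \<notin> sgn_set n X"
  by (auto simp: sgn_set_def)

lemma sgn_set_cover: "X \<subseteq> {1..n} \<Longrightarrow> v \<in> {- int n..-1} \<union> {1..int n} \<Longrightarrow>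
    v \<in> sgn_set n X \<or> - v \<in> sgn_set n X"
proof -
  assume X: "X \<subseteq> {1..n}" and v: "v \<in> {- int n..-1} \<union> {1..int n}"
  define k where "k = nat \<bar>v\<bar>"
  have k: "k \<in> {1..n}" "v = int k \<or> v = - int k"
    using v unfolding k_def by auto
  show ?thesis
  proof (cases "k \<in> X")
    case True then show ?thesis using k by (auto simp: sgn_set_def)
  next
    case False then show ?thesis using k by (auto simp: sgn_set_def)
  qed
qed

lemma sgn_set_card: "X \<subseteq> {1..n} \<Longrightarrow> card (sgn_set n X) = n"
proof -
  assume X: "X \<subseteq> {1..n}"
  have fX: "finite X" using X finite_subset by blast
  have "card (sgn_set n X) = card (int ` X) + card ((\<lambda>k. - int k) ` ({1..n} - X))"
    unfolding sgn_set_def using fX by (intro card_Un_disjoint) auto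
  also have "\<dots> = card X + card ({1..n} - X)"
    by (simp add: card_image inj_on_def)
  also have "\<dots> = n"
  proof -
    have "card X \<le> n" using card_mono[OF _ X] by simp
    then show ?thesis using X fX by (simp add: card_Diff_subset)
  qed
  finally show ?thesis .
qed

lemma sgn_set_inj: "inj_on (sgn_set n) (Pow {1..n})"
proof (rule inj_onI)
  fix X Y assume X: "X \<in> Pow {1..n}" and Y: "Y \<in> Pow {1..n}" and e: "sgn_set n X = sgn_set n Y"
  have "\<And>Z. Z \<subseteq> {1..n} \<Longrightarrow> Z = {k. int k \<in> sgn_set n Z}"
    by (auto simp: sgn_set_def)
  then show "X = Y" using X Y e by (metis PowD)
qed

lemma young_finite: "finite (young_diagram p)"
proof (rule finite_subset)
  show "young_diagram p \<subseteq> {..<length p} \<times> {..<Max (set p) + 1}"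
  proof
    fix c assume "c \<in> young_diagram p"
    then obtain i j where c: "c = (i,j)" "i < length p" "j < p ! i" by (auto simp: young_diagram_def)
    have "p ! i \<le> Max (set p)" using c by (intro Max_ge) auto
    hence "j < Max (set p) + 1" using c(3) by linarith
    then show "c \<in> {..<length p} \<times> {..<Max (set p) + 1}" using c(1,2) by simp
  qed
qed auto


lemma main_count:
  fixes L :: "(nat \<times> nat) set" and m :: nat
  assumes fin: "finite L" and m: "m \<ge> 1"
  shows "card (T_B L m) = 2 ^ card L * num_SYT L"
proof -
  define n where "n = card L"
  define s where "s = int m - Min {int j - int i | i j. (i, j) \<in> L}"
  define h where "h = (\<lambda>(i::nat, j::nat). (int i, int j + s))"
  define P where "P = place L m"
  have P_def': "P = h ` L" unfolding P_def place_def Let_def h_def s_def by simp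
  define D where "D = P \<union> rot ` P"
  have hinj: "inj h" unfolding h_def by (auto simp: inj_on_def)
  have hbij: "bij_betw h L P" using inj_on_subset[OF hinj subset_UNIV] P_def' by (simp add: bij_betw_def)
  have cardP: "card P = n" using hbij n_def bij_betw_same_card by metis
  have finP: "finite P" using P_def' fin by simp
  have fset: "{int j - int i | i j. (i, j) \<in> L} = (\<lambda>(i,j). int j - int i) ` L" by force
  have Pcont: "\<And>c. c \<in> P \<Longrightarrow> icontent c \<ge> int m"
  proof -
    fix c assume "c \<in> P"
    then obtain i j where ij: "(i,j) \<in> L" "c = h (i,j)" using P_def' by auto
    have "Min {int j - int i | i j. (i, j) \<in> L} \<le> int j - int i"
      unfolding fset using fin ij by (intro Min_le) auto
    then show "icontent c \<ge> int m" using ij by (simp add: h_def s_def icontent_def)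
  qed
  have Rcont: "\<And>c. c \<in> rot ` P \<Longrightarrow> icontent c \<le> - int m - 1" using Pcont by fastforce
  have PR: "\<And>c. c \<in> P \<Longrightarrow> c \<notin> rot ` P" using Pcont Rcont m by fastforce
  have rP: "\<And>c. c \<in> rot ` P \<Longrightarrow> rot c \<in> P" by auto
  have rP2: "\<And>c. c \<in> P \<Longrightarrow> rot c \<in> rot ` P" by auto
  define RL where "RL = {((i,j),(i,Suc j)) | i j. (i,j) \<in> L \<and> (i,Suc j) \<in> L}
     \<union> {((i,j),(Suc i,j)) | i j. (i,j) \<in> L \<and> (Suc i,j) \<in> L}"
  define RP where "RP = {((i,j),(i,j+1)) | i j. (i,j) \<in> P \<and> (i,j+1) \<in> P}
     \<union> {((i,j),(i+1,j)) | i j::int. (i,j) \<in> P \<and> (i+1,j) \<in> P}"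
  define A where "A = (\<lambda>S. {G :: int\<times>int \<Rightarrow> int. bij_betw G P S \<and> (\<forall>c. c \<notin> P \<longrightarrow> G c = 0)
      \<and> (\<forall>(a,b)\<in>RP. G a < G b)})"
  have SYT_eq: "SYT L = {G. bij_betw G L {1..n} \<and> (\<forall>c. c \<notin> L \<longrightarrow> G c = 0) \<and> (\<forall>(a,b)\<in>RL. G a < G b)}"
    unfolding SYT_def RL_def n_def by fastforce
  have RL_sub: "RL \<subseteq> L \<times> L" unfolding RL_def by auto
  have RP_img: "RP = (\<lambda>(a,b). (h a, h b)) ` RL"
  proof
    show "(\<lambda>(a,b). (h a, h b)) ` RL \<subseteq> RP"
    proof
      fix x assume "x \<in> (\<lambda>(a,b). (h a, h b)) ` RL"
      then obtain a b where ab: "(a,b) \<in> RL" "x = (h a, h b)" by auto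
      from ab(1) consider (r) i j where "a = (i,j)" "b = (i, Suc j)" "(i,j) \<in> L" "(i,Suc j) \<in> L"
        | (c) i j where "a = (i,j)" "b = (Suc i, j)" "(i,j) \<in> L" "(Suc i,j) \<in> L"
        unfolding RL_def by blast
      then show "x \<in> RP"
      proof cases
        case r
        have m: "h a \<in> P" "h b \<in> P" using r P_def' by auto
        have e: "h a = (int i, int j + s)" "h b = (int i, (int j + s) + 1)" using r by (simp_all add: h_def)
        show ?thesis using m[unfolded e] ab(2)[unfolded e] unfolding RP_def by blast
      next
        case c
        have m: "h a \<in> P" "h b \<in> P" using c P_def' by auto
        have e: "h a = (int i, int j + s)" "h b = (int i + 1, int j + s)" using c by (simp_all add: h_def)
        show ?thesis using m[unfolded e] ab(2)[unfolded e] unfolding RP_def by blast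
      qed
    qed
    show "RP \<subseteq> (\<lambda>(a,b). (h a, h b)) ` RL"
    proof
      fix x assume "x \<in> RP"
      then consider (r) i j where "x = ((i,j),(i,j+1))" "(i,j) \<in> P" "(i,j+1) \<in> P"
        | (c) i j where "x = ((i,j),(i+1,j))" "(i,j) \<in> P" "(i+1,j) \<in> P"
        unfolding RP_def by blast
      then show "x \<in> (\<lambda>(a,b). (h a, h b)) ` RL"
      proof cases
        case r
        then obtain i1 j1 i2 j2 where q: "(i1,j1) \<in> L" "(i,j) = h (i1,j1)" "(i2,j2) \<in> L" "(i,j+1) = h (i2,j2)"
          unfolding P_def' by auto
        then have e: "i2 = i1" "j2 = Suc j1" by (auto simp: h_def)
        have "((i1,j1),(i1,Suc j1)) \<in> RL" using q e unfolding RL_def by auto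
        moreover have "x = (\<lambda>(a,b). (h a, h b)) ((i1,j1),(i1,Suc j1))" using r q e by simp
        ultimately show ?thesis by blast
      next
        case c
        then obtain i1 j1 i2 j2 where q: "(i1,j1) \<in> L" "(i,j) = h (i1,j1)" "(i2,j2) \<in> L" "(i+1,j) = h (i2,j2)"
          unfolding P_def' by auto
        then have e: "i2 = Suc i1" "j2 = j1" by (auto simp: h_def)
        have "((i1,j1),(Suc i1,j1)) \<in> RL" using q e unfolding RL_def by auto
        moreover have "x = (\<lambda>(a,b). (h a, h b)) ((i1,j1),(Suc i1,j1))" using c q e by simp
        ultimately show ?thesis by blast
      qed
    qed
  qed
  have cardA: "\<And>X. X \<subseteq> {1..n} \<Longrightarrow> card (A (sgn_set n X)) = card (SYT L)"
  proof -
    fix X assume X: "X \<subseteq> {1..n}"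
    have "finite (sgn_set n X)" using sgn_set_sub[OF X] finite_subset by blast
    then obtain e where e: "bij_betw e {1..n} (sgn_set n X)" "strict_mono_on {1..n} e"
      using order_iso[of "sgn_set n X" n] sgn_set_card[OF X] by auto
    show "card (A (sgn_set n X)) = card (SYT L)"
      unfolding SYT_eq A_def using transport[OF hbij e(1) e(2) RL_sub RP_img] by simp
  qed
  have finA: "\<And>S. finite S \<Longrightarrow> finite (A S)" unfolding A_def by (rule finite_fillings[OF finP])
  have TB: "T_B L m = (\<Union>X\<in>Pow {1..n}. A (sgn_set n X))"
  proof -
    have T_unf: "T_B L m = (\<lambda>F c. if c \<in> P then F c else 0) ` {F. B_young n D F \<and> B_standard D F}"
      unfolding T_B_def Let_def P_def D_def n_def by simp
    define PM where "PM = {- int n..-1} \<union> {1..int n}"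
    show ?thesis
    proof
      show "T_B L m \<subseteq> (\<Union>X\<in>Pow {1..n}. A (sgn_set n X))"
      proof
        fix G assume "G \<in> T_B L m"
        then obtain F where F: "B_young n D F" "B_standard D F"
          and G: "G = (\<lambda>c. if c \<in> P then F c else 0)" unfolding T_unf by blast
        have bijF: "bij_betw F D PM" using F(1) unfolding B_young_def PM_def by blast
        have cont: "\<And>c c'. c \<in> D \<Longrightarrow> c' \<in> D \<Longrightarrow> F c' = - F c \<Longrightarrow> icontent c' = - icontent c - 1"
          using F(1) unfolding B_young_def by blast
        have injF: "inj_on F D" and imgF: "F ` D = PM" using bijF by (auto simp: bij_betw_def)
        have np: "\<And>c c'. c \<in> P \<Longrightarrow> c' \<in> P \<Longrightarrow> F c' \<noteq> - F c"
        proof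
          fix c c' assume c: "c \<in> P" "c' \<in> P" "F c' = - F c"
          hence "icontent c' = - icontent c - 1" using cont D_def by auto
          then show False using Pcont[OF c(1)] Pcont[OF c(2)] by linarith
        qed
        have nr: "\<And>c c'. c \<in> rot ` P \<Longrightarrow> c' \<in> rot ` P \<Longrightarrow> F c' \<noteq> - F c"
        proof
          fix c c' assume c: "c \<in> rot ` P" "c' \<in> rot ` P" "F c' = - F c"
          hence "icontent c' = - icontent c - 1" using cont D_def by auto
          then show False using Rcont[OF c(1)] Rcont[OF c(2)] m by linarith
        qed
        define X where "X = {k \<in> {1..n}. int k \<in> F ` P}"
        have Xs: "X \<subseteq> {1..n}" unfolding X_def by auto
        have FP: "F ` P = sgn_set n X"
        proof
          show "F ` P \<subseteq> sgn_set n X"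
          proof
            fix v assume "v \<in> F ` P"
            then obtain c where c: "c \<in> P" "v = F c" by auto
            have vPM: "v \<in> PM" using imgF c D_def by auto
            show "v \<in> sgn_set n X"
            proof (cases "v > 0")
              case True
              hence "nat v \<in> X" "v = int (nat v)" using vPM c unfolding X_def PM_def by auto
              then show ?thesis unfolding sgn_set_def by blast
            next
              case False
              hence k: "nat (- v) \<in> {1..n}" "v = - int (nat (- v))" using vPM unfolding PM_def by auto
              have "nat (- v) \<notin> X"
              proof
                assume "nat (- v) \<in> X"
                then obtain c' where "c' \<in> P" "F c' = - v" using k unfolding X_def by auto
                then show False using np[OF c(1)] c(2) by auto
              qed
              then show ?thesis using k unfolding sgn_set_def by blast
            qed
          qed
          show "sgn_set n X \<subseteq> F ` P"
          proof
            fix v assume v: "v \<in> sgn_set n X"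
            then consider (pos) k where "k \<in> X" "v = int k"
              | (neg) k where "k \<in> {1..n}" "k \<notin> X" "v = - int k" by (auto simp: sgn_set_def)
            then show "v \<in> F ` P"
            proof cases
              case pos then show ?thesis by (auto simp: X_def)
            next
              case neg
              have "v \<in> F ` D" using imgF neg unfolding PM_def by auto
              then obtain c where c: "c \<in> D" "F c = v" by auto
              show ?thesis
              proof (cases "c \<in> P")
                case True then show ?thesis using c by auto
              next
                case False
                hence cR: "c \<in> rot ` P" using c D_def by auto
                have "int k \<in> F ` D" using imgF neg unfolding PM_def by auto
                then obtain c' where c': "c' \<in> D" "F c' = int k" by auto
                have "c' \<notin> P"
                proof
                  assume "c' \<in> P"
                  hence "int k \<in> F ` P" using c'(2) by (metis image_eqI)
                  then show False using neg unfolding X_def by auto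
                qed
                hence c'R: "c' \<in> rot ` P" using c' D_def by auto
                have False using nr[OF cR c'R] c c' neg by auto
                then show ?thesis ..
              qed
            qed
          qed
        qed
        have "bij_betw F P (F ` P)" using inj_on_subset[OF injF] D_def by (auto simp: bij_betw_def)
        hence "bij_betw F P (sgn_set n X)" using FP by simp
        hence b: "bij_betw G P (sgn_set n X)" by (rule bij_betw_cong[THEN iffD1, rotated]) (simp add: G)
        have mono: "\<forall>(a,b)\<in>RP. G a < G b"
        proof (clarify)
          fix a1 a2 b1 b2 assume ab: "((a1,a2),(b1,b2)) \<in> RP"
          then have "(a1,a2) \<in> P" "(b1,b2) \<in> P" unfolding RP_def by auto
          moreover have "F (a1,a2) < F (b1,b2)" using ab F(2) unfolding RP_def B_standard_def D_def by auto
          ultimately show "G (a1,a2) < G (b1,b2)" using G by simp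
        qed
        have "G \<in> A (sgn_set n X)" unfolding A_def using b mono G by auto
        then show "G \<in> (\<Union>X\<in>Pow {1..n}. A (sgn_set n X))" using Xs by blast
      qed
      show "(\<Union>X\<in>Pow {1..n}. A (sgn_set n X)) \<subseteq> T_B L m"
      proof
        fix G assume "G \<in> (\<Union>X\<in>Pow {1..n}. A (sgn_set n X))"
        then obtain X where X: "X \<subseteq> {1..n}" and GA: "G \<in> A (sgn_set n X)" by auto
        define S where "S = sgn_set n X"
        have bG: "bij_betw G P S" and zG: "\<And>c. c \<notin> P \<Longrightarrow> G c = 0"
          and mG: "\<And>a b. (a,b) \<in> RP \<Longrightarrow> G a < G b" using GA unfolding A_def S_def by auto
        have GS: "\<And>c. c \<in> P \<Longrightarrow> G c \<in> S" using bG by (auto simp: bij_betw_def)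
        have injG: "inj_on G P" using bG by (auto simp: bij_betw_def)
        have imgG: "G ` P = S" using bG by (auto simp: bij_betw_def)
        have nopair: "\<And>c c'. c \<in> P \<Longrightarrow> c' \<in> P \<Longrightarrow> G c' \<noteq> - G c"
          using sgn_set_nopair[OF X] GS unfolding S_def by (metis minus_minus)
        define F where "F = (\<lambda>c. if c \<in> P then G c else if c \<in> rot ` P then - G (rot c) else 0)"
        have FP: "\<And>c. c \<in> P \<Longrightarrow> F c = G c" unfolding F_def by simp
        have FR: "\<And>c. c \<in> rot ` P \<Longrightarrow> F c = - G (rot c)" unfolding F_def using PR by auto
        have restr: "G = (\<lambda>c. if c \<in> P then F c else 0)" using zG FP by auto
        have Dcases: "\<And>c. c \<in> D \<Longrightarrow> (c \<in> P \<and> c \<notin> rot ` P) \<or> (c \<in> rot ` P \<and> c \<notin> P)"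
          using PR D_def by auto
        have injF: "inj_on F D"
        proof (rule inj_onI)
          fix a b assume a: "a \<in> D" and b: "b \<in> D" and e: "F a = F b"
          show "a = b"
          proof (cases "a \<in> P")
            case aP: True
            show ?thesis
            proof (cases "b \<in> P")
              case True then show ?thesis using aP e FP injG by (auto simp: inj_on_def)
            next
              case False
              hence "b \<in> rot ` P" using b D_def by auto
              hence "G a = - G (rot b)" "rot b \<in> P" using e FP[OF aP] FR by auto
              then show ?thesis using nopair[OF \<open>rot b \<in> P\<close> aP] by simp
            qed
          next
            case aN: False
            hence aR: "a \<in> rot ` P" using a D_def by auto
            show ?thesis
            proof (cases "b \<in> P")
              case True
              hence "G b = - G (rot a)" "rot a \<in> P" using e FP FR[OF aR] aR by auto
              then show ?thesis using nopair[OF \<open>rot a \<in> P\<close> True] by simp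
            next
              case False
              hence bR: "b \<in> rot ` P" using b D_def by auto
              hence "G (rot a) = G (rot b)" using e FR aR by auto
              hence "rot a = rot b" using injG rP[OF aR] rP[OF bR] by (auto simp: inj_on_def)
              then show ?thesis by (metis rot_rot)
            qed
          qed
        qed
        have "F ` P = G ` P" by (rule image_cong[OF refl FP])
        hence FimP: "F ` P = S" using imgG by simp
        have FimR: "F ` (rot ` P) = uminus ` S"
        proof -
          have "F ` (rot ` P) = (\<lambda>c. - G (rot c)) ` (rot ` P)" by (rule image_cong[OF refl FR])
          also have "\<dots> = (\<lambda>c. - G c) ` P" by (simp add: image_image)
          also have "\<dots> = uminus ` S" unfolding imgG[symmetric] image_image ..
          finally show ?thesis .
        qed
        have imgF: "F ` D = {- int n..-1} \<union> {1..int n}"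
        proof
          have FD: "F ` D = S \<union> uminus ` S" using FimP FimR unfolding D_def by (simp add: image_Un)
          have w: "\<And>w. w \<in> S \<Longrightarrow> w \<in> {- int n..-1} \<union> {1..int n} \<and> - w \<in> {- int n..-1} \<union> {1..int n}"
          proof -
            fix w assume "w \<in> S"
            hence "w \<in> {- int n..-1} \<union> {1..int n}" using sgn_set_sub[OF X] unfolding S_def by blast
            then show "w \<in> {- int n..-1} \<union> {1..int n} \<and> - w \<in> {- int n..-1} \<union> {1..int n}" by auto
          qed
          show "F ` D \<subseteq> {- int n..-1} \<union> {1..int n}" unfolding FD using w by blast
          show "{- int n..-1} \<union> {1..int n} \<subseteq> F ` D"
          proof
            fix v assume v: "v \<in> {- int n..-1} \<union> {1..int n}"
            from sgn_set_cover[OF X v] have "v \<in> S \<or> - v \<in> S" unfolding S_def .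
            then show "v \<in> F ` D"
            proof
              assume "v \<in> S" then show ?thesis unfolding FD by blast
            next
              assume "- v \<in> S"
              hence "v \<in> uminus ` S" by (metis image_eqI minus_minus)
              then show ?thesis unfolding FD by blast
            qed
          qed
        qed
        have finD: "finite D" using finP D_def by simp
        have content: "\<forall>c\<in>D. \<forall>c'\<in>D. F c' = - F c \<longrightarrow> icontent c' = - icontent c - 1"
        proof (intro ballI impI)
          fix c c' assume c: "c \<in> D" and c': "c' \<in> D" and e: "F c' = - F c"
          show "icontent c' = - icontent c - 1"
          proof (cases "c \<in> P")
            case cP: True
            show ?thesis
            proof (cases "c' \<in> P")
              case True then show ?thesis using nopair[OF cP True] e FP cP by auto
            next
              case False
              hence cR: "c' \<in> rot ` P" using c' D_def by auto
              hence "G (rot c') = G c" using e FP[OF cP] FR by auto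
              hence "rot c' = c" using injG rP[OF cR] cP by (auto simp: inj_on_def)
              hence "c' = rot c" by (metis rot_rot)
              then show ?thesis by simp
            qed
          next
            case cN: False
            hence cR: "c \<in> rot ` P" using c D_def by auto
            show ?thesis
            proof (cases "c' \<in> P")
              case True
              hence "G c' = G (rot c)" using e FP FR[OF cR] by auto
              hence "c' = rot c" using injG rP[OF cR] True by (auto simp: inj_on_def)
              then show ?thesis by simp
            next
              case False
              hence c'R: "c' \<in> rot ` P" using c' D_def by auto
              hence "- G (rot c') = G (rot c)" using e FR cR by auto
              then show ?thesis using nopair[OF rP[OF cR] rP[OF c'R]] by simp
            qed
          qed
        qed
        have std: "B_standard D F"
          unfolding B_standard_def
        proof (intro conjI allI impI)
          fix i j assume ij: "(i, j) \<in> D \<and> (i, j + 1) \<in> D"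
          have ic: "icontent (i, j + 1) = icontent (i, j) + 1" by (simp add: icontent_def)
          show "F (i, j) < F (i, j + 1)"
          proof (cases "(i,j) \<in> P")
            case aP: True
            show ?thesis
            proof (cases "(i,j+1) \<in> P")
              case True
              hence "((i,j),(i,j+1)) \<in> RP" using aP unfolding RP_def by blast
              then show ?thesis using mG FP aP True by auto
            next
              case False
              hence "(i,j+1) \<in> rot ` P" using ij D_def by auto
              then show ?thesis using Rcont Pcont[OF aP] ic m by fastforce
            qed
          next
            case aN: False
            hence aR: "(i,j) \<in> rot ` P" using ij D_def by auto
            show ?thesis
            proof (cases "(i,j+1) \<in> P")
              case True
              then show ?thesis using Rcont[OF aR] Pcont ic m by fastforce
            next
              case False
              hence bR: "(i,j+1) \<in> rot ` P" using ij D_def by auto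
              have "rot (i,j+1) = (- i - 1, - j - 3)" "rot (i,j) = (- i - 1, (- j - 3) + 1)"
                by (simp_all add: rot_def)
              hence "(rot (i,j+1), rot (i,j)) \<in> RP" using rP[OF aR] rP[OF bR] unfolding RP_def by auto
              hence "G (rot (i,j+1)) < G (rot (i,j))" by (rule mG)
              then show ?thesis using FR aR bR by simp
            qed
          qed
        next
          fix i j assume ij: "(i, j) \<in> D \<and> (i + 1, j) \<in> D"
          have ic: "icontent (i + 1, j) = icontent (i, j) - 1" by (simp add: icontent_def)
          show "F (i, j) < F (i + 1, j)"
          proof (cases "(i,j) \<in> P")
            case aP: True
            show ?thesis
            proof (cases "(i+1,j) \<in> P")
              case True
              hence "((i,j),(i+1,j)) \<in> RP" using aP unfolding RP_def by blast
              then show ?thesis using mG FP aP True by auto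
            next
              case False
              hence "(i+1,j) \<in> rot ` P" using ij D_def by auto
              then show ?thesis using Rcont Pcont[OF aP] ic m by fastforce
            qed
          next
            case aN: False
            hence aR: "(i,j) \<in> rot ` P" using ij D_def by auto
            show ?thesis
            proof (cases "(i+1,j) \<in> P")
              case True
              then show ?thesis using Rcont[OF aR] Pcont ic m by fastforce
            next
              case False
              hence bR: "(i+1,j) \<in> rot ` P" using ij D_def by auto
              have "rot (i+1,j) = (- i - 2, - j - 2)" "rot (i,j) = ((- i - 2) + 1, - j - 2)"
                by (simp_all add: rot_def)
              hence "(rot (i+1,j), rot (i,j)) \<in> RP" using rP[OF aR] rP[OF bR] unfolding RP_def by auto
              hence "G (rot (i+1,j)) < G (rot (i,j))" by (rule mG)
              then show ?thesis using FR aR bR by simp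
            qed
          qed
        qed
        have "B_young n D F" unfolding B_young_def bij_betw_def using finD injF imgF content
          by blast
        then have "F \<in> {F. B_young n D F \<and> B_standard D F}" using std by simp
        then show "G \<in> T_B L m" unfolding T_unf using restr by blast
      qed
    qed
  qed
  have "card (T_B L m) = (\<Sum>X\<in>Pow {1..n}. card (A (sgn_set n X)))"
    unfolding TB
  proof (rule card_UN_disjoint)
    show "\<forall>X\<in>Pow {1..n}. finite (A (sgn_set n X))"
      using finA sgn_set_sub finite_subset by (metis PowD finite_Un finite_atLeastAtMost_int)
    show "\<forall>X\<in>Pow {1..n}. \<forall>Y\<in>Pow {1..n}. X \<noteq> Y \<longrightarrow> A (sgn_set n X) \<inter> A (sgn_set n Y) = {}"
    proof (intro ballI impI)
      fix X Y assume XY: "X \<in> Pow {1..n}" "Y \<in> Pow {1..n}" "X \<noteq> Y"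
      hence ne: "sgn_set n X \<noteq> sgn_set n Y" using sgn_set_inj[of n] by (auto simp: inj_on_def)
      show "A (sgn_set n X) \<inter> A (sgn_set n Y) = {}"
        using ne unfolding A_def by (auto simp: bij_betw_def)
    qed
  qed simp
  also have "\<dots> = (\<Sum>X\<in>Pow {1..n}. card (SYT L))" using cardA by simp
  also have "\<dots> = 2 ^ n * card (SYT L)" by (simp add: card_Pow)
  finally show ?thesis by (simp add: n_def num_SYT_def)
qed

theorem proposition6p5:
  fixes mu nu :: "nat list" and m :: nat
  assumes "is_partition mu" and "is_partition nu"
    and "young_diagram nu \<subseteq> young_diagram mu"
    and "m \<ge> 1"
  shows "card (T_B (skew_diagram mu nu) m)
           = 2 ^ card (skew_diagram mu nu) * num_SYT (skew_diagram mu nu)"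
proof (rule main_count)
  show "finite (skew_diagram mu nu)" unfolding skew_diagram_def using young_finite by blast
  show "m \<ge> 1" by fact
qed

end
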